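(* For any edge-set $F\subseteq E(H)$ with $|F|=\ell$ and any tree embedding $(\mathcal T,\mathcal M,y)$ in the support of $\mathcal D$ that is good for $F$, the number of shattered components in $\mathbb Q^F$ is at most $2\ell\beta$.
   Context: Standing setup. $G=(V,E)$ is an undirected graph with $n=|V|$, demand-pairs $(S_i,T_i)$, $i\in[q]$, of subsets of $V$. $\ell\ge1$ is an integer and $E_\ell\subseteq E$ an edge set such that in $(V,E_\ell)$ every $(S_i,T_i)$ is $\ell$-edge-connected. $x:E\to[0,1]$ satisfies $x_e=1$ for $e\in E_\ell$ and $\sum_{e\in\delta_G(X)}x_e\ge \ell+1$ for every $i\in[q]$ and every $X$ with $T_i\subseteq X\subseteq V\setminus S_i$. $\beta\ge1$ is a real. $\mathsf{LARGE}=\{e: x_e\ge 1/(4\ell\beta)\}$ and $H=(V,\mathsf{LARGE})$. Capacities: $\tilde x_e=1/(4\ell\beta)$ if $e\in\mathsf{LARGE}$; $\tilde x_e=0$ if $x_e<\frac{1}{2n^2}\cdot\frac1{4\ell\beta}$; $\tilde x_e=x_e$ otherwise. A tree embedding $(\mathcal T,\mathcal M,y)$ of $(G,\tilde x)$: $\mathcal T$ is a tree; $\mathcal M$ maps nodes of $\mathcal T$ to vertices of $G$ and is a bijection between leaves of $\mathcal T$ and $V$; each tree edge $f=(u,v)$ is mapped to a path $\mathcal M(f)$ in $G$ between $\mathcal M(u)$ and $\mathcal M(v)$; $y(f)=\tilde x(\delta_G(X))$ where $(X,V\setminus X)$ is the leaf partition induced by $\mathcal T-f$. $\mathcal M^{-1}(e)=\{f: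 e\in\mathcal M(f)\}$, $\mathcal M^{-1}(F)=\bigcup_{e\in F}\mathcal M^{-1}(e)$. $\mathcal D$ is a probability distribution over tree embeddings of $(G,\tilde x)$ with $\mathbb{E}_{\mathcal T\sim\mathcal D}[\sum_{f\in\mathcal M^{-1}(e)}y(f)]\le\beta\,\tilde x_e$ for every $e\in E$, and for every tree in its support and all disjoint $A,B\subseteq V$, the maximum $A$–$B$ flow in $\mathcal T$ under $y$ is at least the maximum $A$–$B$ flow in $G$ under $\tilde x$. A tree embedding is good for $F\subseteq E(H)$ if $\sum_{f\in\mathcal M^{-1}(F)}y(f)\le1/2$. $\mathbb Q^F$ is the set of vertex sets of connected components of $(V,E(H)\setminus F)$. A component $Q\in\mathbb Q^F$ is shattered (w.r.t. $\mathcal T$) if its leaves are not all in one connected component of $\mathcal T$ with the edges $\mathcal M^{-1}(F)$ removed. *)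

theory Defs
  imports "HOL-Probability.Probability"
begin

text \<open>Multigraphs are given by a vertex set, an edge set of an abstract edge type,
and an endpoint map; every edge has exactly two distinct endpoints.\<close>

definition wf_graph :: "'v set \<Rightarrow> 'e set \<Rightarrow> ('e \<Rightarrow> 'v set) \<Rightarrow> bool" where
  "wf_graph V E ends \<longleftrightarrow> finite V \<and> finite E \<and>
     (\<forall>e\<in>E. ends e \<subseteq> V \<and> card (ends e) = 2)"

definition reach :: "'v set \<Rightarrow> 'e set \<Rightarrow> ('e \<Rightarrow> 'v set) \<Rightarrow> 'v \<Rightarrow> 'v \<Rightarrow> bool" where
  "reach N Ed ends u v \<longleftrightarrow> u \<in> N \<and>
     (u, v) \<in> {(a, b). \<exists>e\<in>Ed. ends e = {a, b}}\<^sup>*"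

definition components :: "'v set \<Rightarrow> 'e set \<Rightarrow> ('e \<Rightarrow> 'v set) \<Rightarrow> 'v set set" where
  "components N Ed ends = {{v. reach N Ed ends u v} | u. u \<in> N}"

definition cut :: "'e set \<Rightarrow> ('e \<Rightarrow> 'v set) \<Rightarrow> 'v set \<Rightarrow> 'e set" where
  "cut E ends X = {e \<in> E. ends e \<inter> X \<noteq> {} \<and> ends e - X \<noteq> {}}"

definition is_path :: "'v set \<Rightarrow> 'e set \<Rightarrow> ('e \<Rightarrow> 'v set) \<Rightarrow> 'v \<Rightarrow> 'v \<Rightarrow> 'e list \<Rightarrow> bool" where
  "is_path V E ends u v es \<longleftrightarrow> set es \<subseteq> E \<and>
     (\<exists>vs. length vs = Suc (length es) \<and> hd vs = u \<and> last vs = v \<and> set vs \<subseteq> V \<and>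
        distinct vs \<and> (\<forall>i<length es. ends (es ! i) = {vs ! i, vs ! Suc i}))"

definition is_cycle :: "'e set \<Rightarrow> ('e \<Rightarrow> 'v set) \<Rightarrow> 'e list \<Rightarrow> bool" where
  "is_cycle E ends es \<longleftrightarrow> es \<noteq> [] \<and> set es \<subseteq> E \<and> distinct es \<and>
     (\<exists>vs. length vs = Suc (length es) \<and> hd vs = last vs \<and> distinct (tl vs) \<and>
        (\<forall>i<length es. ends (es ! i) = {vs ! i, vs ! Suc i}))"

definition is_tree :: "'n set \<Rightarrow> 'f set \<Rightarrow> ('f \<Rightarrow> 'n set) \<Rightarrow> bool" where
  "is_tree N TE tends \<longleftrightarrow> wf_graph N TE tends \<and> N \<noteq> {} \<and>
     (\<forall>u\<in>N. \<forall>v\<in>N. reach N TE tends u v) \<and> \<not> (\<exists>es. is_cycle TE tends es)"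

text \<open>Flows in an undirected graph with capacities c between vertex sets A and B.
  g e w is the net amount of flow leaving vertex w through edge e.\<close>
definition is_flow :: "'v set \<Rightarrow> 'e set \<Rightarrow> ('e \<Rightarrow> 'v set) \<Rightarrow> ('e \<Rightarrow> real) \<Rightarrow>
    'v set \<Rightarrow> 'v set \<Rightarrow> ('e \<Rightarrow> 'v \<Rightarrow> real) \<Rightarrow> bool" where
  "is_flow N Ed ends c A B g \<longleftrightarrow>
     (\<forall>e\<in>Ed. \<forall>w. w \<notin> ends e \<longrightarrow> g e w = 0) \<and>
     (\<forall>e\<in>Ed. \<forall>u v. ends e = {u, v} \<longrightarrow> g e u = - g e v \<and> \<bar>g e u\<bar> \<le> c e) \<and>
     (\<forall>w\<in>N - (A \<union> B). (\<Sum>e\<in>Ed. g e w) = 0)"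

definition flow_value :: "'e set \<Rightarrow> 'v set \<Rightarrow> ('e \<Rightarrow> 'v \<Rightarrow> real) \<Rightarrow> real" where
  "flow_value Ed A g = (\<Sum>w\<in>A. \<Sum>e\<in>Ed. g e w)"

definition max_flow :: "'v set \<Rightarrow> 'e set \<Rightarrow> ('e \<Rightarrow> 'v set) \<Rightarrow> ('e \<Rightarrow> real) \<Rightarrow>
    'v set \<Rightarrow> 'v set \<Rightarrow> real" where
  "max_flow N Ed ends c A B = Sup {flow_value Ed A g | g. is_flow N Ed ends c A B g}"

text \<open>Tree embeddings (T, M, y): tree nodes, tree edges, tree edge endpoints,
  node map M, edge map M (tree edge to a path in G, as an edge list), and y.\<close>
record ('n, 'f, 'v, 'e) temb =
  tnodes :: "'n set"
  tedges :: "'f set"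
  tends  :: "'f \<Rightarrow> 'n set"
  nmap   :: "'n \<Rightarrow> 'v"
  emap   :: "'f \<Rightarrow> 'e list"
  ty     :: "'f \<Rightarrow> real"

definition leaves :: "('n, 'f, 'v, 'e) temb \<Rightarrow> 'n set" where
  "leaves \<tau> = {u \<in> tnodes \<tau>. card {f \<in> tedges \<tau>. u \<in> tends \<tau> f} \<le> 1}"

definition Minv :: "('n, 'f, 'v, 'e) temb \<Rightarrow> 'e set \<Rightarrow> 'f set" where
  "Minv \<tau> F = {f \<in> tedges \<tau>. \<exists>e\<in>F. e \<in> set (emap \<tau> f)}"

definition is_temb :: "'v set \<Rightarrow> 'e set \<Rightarrow> ('e \<Rightarrow> 'v set) \<Rightarrow> ('e \<Rightarrow> real) \<Rightarrow>
    ('n, 'f, 'v, 'e) temb \<Rightarrow> bool" where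
  "is_temb V E ends c \<tau> \<longleftrightarrow>
     is_tree (tnodes \<tau>) (tedges \<tau>) (tends \<tau>) \<and>
     nmap \<tau> ` tnodes \<tau> \<subseteq> V \<and>
     bij_betw (nmap \<tau>) (leaves \<tau>) V \<and>
     (\<forall>f\<in>tedges \<tau>. \<exists>u v. tends \<tau> f = {u, v} \<and>
        is_path V E ends (nmap \<tau> u) (nmap \<tau> v) (emap \<tau> f)) \<and>
     (\<forall>f\<in>tedges \<tau>. \<forall>u\<in>tends \<tau> f.
        ty \<tau> f = (\<Sum>e\<in>cut E ends
           (nmap \<tau> ` {l \<in> leaves \<tau>. reach (tnodes \<tau>) (tedges \<tau> - {f}) (tends \<tau>) u l}). c e))"

definition shattered :: "('n, 'f, 'v, 'e) temb \<Rightarrow> 'e set \<Rightarrow> 'v set \<Rightarrow> bool" where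
  "shattered \<tau> F Q \<longleftrightarrow>
     \<not> (\<forall>l1\<in>leaves \<tau>. \<forall>l2\<in>leaves \<tau>. nmap \<tau> l1 \<in> Q \<longrightarrow> nmap \<tau> l2 \<in> Q \<longrightarrow>
          reach (tnodes \<tau>) (tedges \<tau> - Minv \<tau> F) (tends \<tau>) l1 l2)"

definition good_for :: "('n, 'f, 'v, 'e) temb \<Rightarrow> 'e set \<Rightarrow> bool" where
  "good_for \<tau> F \<longleftrightarrow> (\<Sum>f\<in>Minv \<tau> F. ty \<tau> f) \<le> 1/2"

definition xtilde :: "nat \<Rightarrow> real \<Rightarrow> nat \<Rightarrow> ('e \<Rightarrow> real) \<Rightarrow> 'e \<Rightarrow> real" where
  "xtilde l \<beta> n x e =
     (if x e \<ge> 1 / (4 * real l * \<beta>) then 1 / (4 * real l * \<beta>)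
      else if x e < (1 / (2 * real n ^ 2)) * (1 / (4 * real l * \<beta>)) then 0
      else x e)"

definition LARGE :: "'e set \<Rightarrow> nat \<Rightarrow> real \<Rightarrow> ('e \<Rightarrow> real) \<Rightarrow> 'e set" where
  "LARGE E l \<beta> x = {e \<in> E. x e \<ge> 1 / (4 * real l * \<beta>)}"

end

theory Submission
  imports Defs "HOL-Library.Transitive_Closure_Table"
begin


definition erel :: "'e set \<Rightarrow> ('e \<Rightarrow> 'v set) \<Rightarrow> ('v \<times> 'v) set" where
  "erel Ed ends = {(a, b). \<exists>e\<in>Ed. ends e = {a, b}}"

lemma reach_erel: "reach N Ed ends u v \<longleftrightarrow> u \<in> N \<and> (u, v) \<in> (erel Ed ends)\<^sup>*"
  by (simp add: reach_def erel_def)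

lemma erel_sym: "(a, b) \<in> erel Ed ends \<Longrightarrow> (b, a) \<in> erel Ed ends"
  by (auto simp: erel_def insert_commute)

lemma erel_rt_sym: "(a, b) \<in> (erel Ed ends)\<^sup>* \<Longrightarrow> (b, a) \<in> (erel Ed ends)\<^sup>*"
proof (induction rule: rtrancl_induct)
  case base then show ?case by simp
next
  case (step y z)
  then show ?case by (meson converse_rtrancl_into_rtrancl erel_sym)
qed

lemma erel_mono: "Ed \<subseteq> Ed' \<Longrightarrow> (a, b) \<in> (erel Ed ends)\<^sup>* \<Longrightarrow> (a, b) \<in> (erel Ed' ends)\<^sup>*"
proof -
  assume "Ed \<subseteq> Ed'"
  then have "erel Ed ends \<subseteq> erel Ed' ends" by (auto simp: erel_def)
  then show "(a, b) \<in> (erel Ed ends)\<^sup>* \<Longrightarrow> (a, b) \<in> (erel Ed' ends)\<^sup>*"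
    using rtrancl_mono by blast
qed

lemma erel_split:
  assumes "(a, v) \<in> (erel TE ends)\<^sup>*" "ends f = {p, q}"
  shows "(a, v) \<in> (erel (TE - {f}) ends)\<^sup>* \<or> (p, v) \<in> (erel (TE - {f}) ends)\<^sup>*
         \<or> (q, v) \<in> (erel (TE - {f}) ends)\<^sup>*"
  using assms(1)
proof (induction rule: rtrancl_induct)
  case base then show ?case by simp
next
  case (step y z)
  from step(2) obtain e where e: "e \<in> TE" "ends e = {y, z}" by (auto simp: erel_def)
  show ?case
  proof (cases "e = f")
    case True
    then have "z = p \<or> z = q" using e assms(2) by (metis doubleton_eq_iff insertI1 insert_commute insert_iff)
    then show ?thesis by auto
  next
    case False
    then have "(y, z) \<in> erel (TE - {f}) ends" using e by (auto simp: erel_def)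
    then show ?thesis using step(3) by (meson rtrancl.rtrancl_into_rtrancl)
  qed
qed

lemma erel_cross:
  assumes "(p1, p2) \<in> r\<^sup>*" "p1 \<in> X" "p2 \<notin> X"
  shows "\<exists>a b. (p1, a) \<in> r\<^sup>* \<and> (a, b) \<in> r \<and> a \<in> X \<and> b \<notin> X"
  using assms(1,3)
proof (induction rule: rtrancl_induct)
  case base then show ?case using assms(2) by simp
next
  case (step y z)
  show ?case
  proof (cases "y \<in> X")
    case True then show ?thesis using step by blast
  next
    case False then show ?thesis using step by blast
  qed
qed

lemma path_edges:
  assumes "rtrancl_path (\<lambda>a b. (a, b) \<in> erel Ed ends) x xs y"
  shows "\<exists>es. length es = length xs \<and> set es \<subseteq> Ed \<and>
     (\<forall>i<length xs. ends (es ! i) = {(x # xs) ! i, (x # xs) ! Suc i})"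
  using assms
proof (induction rule: rtrancl_path.induct)
  case (base x) then show ?case by simp
next
  case (step x y ys z)
  then obtain es where es: "length es = length ys" "set es \<subseteq> Ed"
     "\<forall>i<length ys. ends (es ! i) = {(y # ys) ! i, (y # ys) ! Suc i}" by blast
  from step(1) obtain e where e: "e \<in> Ed" "ends e = {x, y}" by (auto simp: erel_def)
  show ?case
  proof (intro exI[of _ "e # es"] conjI allI impI)
    fix i assume "i < length (y # ys)"
    then show "ends ((e # es) ! i) = {(x # y # ys) ! i, (x # y # ys) ! Suc i}"
      using es e by (cases i) auto
  qed (use es e in auto)
qed

lemma no_cycle_reach:
  assumes nc: "\<not> (\<exists>es. is_cycle TE te es)" and f: "f \<in> TE" "te f = {p, q}" "p \<noteq> q"
    and r: "(p, q) \<in> (erel (TE - {f}) te)\<^sup>*"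
  shows False
proof -
  let ?r = "\<lambda>a b. (a, b) \<in> erel (TE - {f}) te"
  have "?r\<^sup>*\<^sup>* p q" using r by (simp add: rtrancl_def)
  then obtain xs where "rtrancl_path ?r p xs q" by (auto simp: rtranclp_eq_rtrancl_path)
  then obtain xs' where xs': "rtrancl_path ?r p xs' q" "distinct (p # xs')"
    by (rule rtrancl_path_distinct)
  have ne: "xs' \<noteq> []" using xs'(1) f(3) by (cases rule: rtrancl_path.cases) auto
  have lq: "last xs' = q" using rtrancl_path_last[OF xs'(1) ne] .
  obtain es where es: "length es = length xs'" "set es \<subseteq> TE - {f}"
     "\<forall>i<length xs'. te (es ! i) = {(p # xs') ! i, (p # xs') ! Suc i}"
    using path_edges[OF xs'(1)] by blast
  have des: "distinct es"
  proof (subst distinct_conv_nth, intro allI impI)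
    fix i j assume ij: "i < length es" "j < length es" "i \<noteq> j"
    show "es ! i \<noteq> es ! j"
    proof
      assume eq: "es ! i = es ! j"
      let ?vs = "p # xs'"
      have d: "\<And>a b. a < length ?vs \<Longrightarrow> b < length ?vs \<Longrightarrow> ?vs ! a = ?vs ! b \<Longrightarrow> a = b"
        using xs'(2) nth_eq_iff_index_eq by blast
      have "{?vs ! i, ?vs ! Suc i} = {?vs ! j, ?vs ! Suc j}" using es(3) ij eq es(1) by metis
      then have "(?vs ! i = ?vs ! j \<and> ?vs ! Suc i = ?vs ! Suc j) \<or> (?vs ! i = ?vs ! Suc j \<and> ?vs ! Suc i = ?vs ! j)"
        by (simp add: doubleton_eq_iff)
      then show False
      proof
        assume "?vs ! i = ?vs ! j \<and> ?vs ! Suc i = ?vs ! Suc j"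
        then have "i = j" using d ij es(1) by (metis Suc_less_eq length_Cons less_SucI)
        then show False using ij by simp
      next
        assume h: "?vs ! i = ?vs ! Suc j \<and> ?vs ! Suc i = ?vs ! j"
        then have "i = Suc j" "Suc i = j" using d ij es(1) by (metis Suc_less_eq length_Cons less_SucI)+
        then show False by simp
      qed
    qed
  qed
  have "is_cycle TE te (f # es)"
    unfolding is_cycle_def
  proof (intro conjI exI[of _ "q # p # xs'"])
    show "set (f # es) \<subseteq> TE" using es(2) f(1) by auto
    show "distinct (f # es)" using des es(2) by auto
    show "length (q # p # xs') = Suc (length (f # es))" using es(1) by simp
    show "hd (q # p # xs') = last (q # p # xs')" using lq ne by simp
    show "distinct (tl (q # p # xs'))" using xs'(2) by simp
    show "\<forall>i<length (f # es). te ((f # es) ! i) = {(q # p # xs') ! i, (q # p # xs') ! Suc i}"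
    proof (intro allI impI)
      fix i assume "i < length (f # es)"
      then show "te ((f # es) ! i) = {(q # p # xs') ! i, (q # p # xs') ! Suc i}"
        using es f by (cases i) (auto simp: insert_commute)
    qed
  qed simp
  then show False using nc by blast
qed

lemma sep_single:
  assumes tree: "is_tree N TE te" and fin: "finite R"
    and nr: "(l1, l2) \<notin> (erel (TE - R) te)\<^sup>*" and N: "l1 \<in> N" "l2 \<in> N"
  shows "\<exists>f\<in>R. (l1, l2) \<notin> (erel (TE - {f}) te)\<^sup>*"
  using fin nr
proof (induction R rule: finite_induct)
  case empty
  have "\<forall>u\<in>N. \<forall>v\<in>N. reach N TE te u v" using tree by (simp add: is_tree_def)
  then have "reach N TE te l1 l2" using N by blast
  then show ?case using empty by (simp add: reach_erel)
next
  case (insert f R0)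
  show ?case
  proof (cases "(l1, l2) \<in> (erel (TE - R0) te)\<^sup>*")
    case False then show ?thesis using insert.IH by blast
  next
    case True
    let ?E' = "TE - R0 - {f}"
    have E': "TE - insert f R0 = ?E'" by auto
    have nr': "(l1, l2) \<notin> (erel ?E' te)\<^sup>*" using insert.prems E' by simp
    have fin: "f \<in> TE - R0"
    proof (rule ccontr)
      assume "f \<notin> TE - R0"
      then have "?E' = TE - R0" by blast
      then show False using True nr' by simp
    qed
    have wf: "wf_graph N TE te" and nc: "\<not> (\<exists>es. is_cycle TE te es)"
      using tree by (simp_all add: is_tree_def)
    then have "card (te f) = 2" using fin unfolding wf_graph_def by blast
    then obtain p q where pq: "te f = {p, q}" "p \<noteq> q" by (auto simp: card_2_iff)
    have fwd: "(p, l2) \<in> (erel ?E' te)\<^sup>* \<or> (q, l2) \<in> (erel ?E' te)\<^sup>*"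
      using erel_split[OF True pq(1)] nr' by blast
    have bwd: "(p, l1) \<in> (erel ?E' te)\<^sup>* \<or> (q, l1) \<in> (erel ?E' te)\<^sup>*"
    proof -
      have "(l2, l1) \<notin> (erel ?E' te)\<^sup>*"
      proof
        assume "(l2, l1) \<in> (erel ?E' te)\<^sup>*"
        from erel_rt_sym[OF this] nr' show False by simp
      qed
      then show ?thesis using erel_split[OF erel_rt_sym[OF True] pq(1)] by blast
    qed
    show ?thesis
    proof (rule bexI[of _ f], rule notI)
      assume W1: "(l1, l2) \<in> (erel (TE - {f}) te)\<^sup>*"
      have sub: "?E' \<subseteq> TE - {f}" by auto
      have "(p, q) \<in> (erel (TE - {f}) te)\<^sup>*"
      proof (cases "(p, l1) \<in> (erel ?E' te)\<^sup>*")
        case pl1: True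
        have "(p, l2) \<notin> (erel ?E' te)\<^sup>*"
          using nr' rtrancl_trans[OF erel_rt_sym[OF pl1]] by blast
        then have ql2: "(q, l2) \<in> (erel ?E' te)\<^sup>*" using fwd by blast
        show ?thesis using rtrancl_trans[OF rtrancl_trans[OF erel_mono[OF sub pl1] W1] erel_mono[OF sub erel_rt_sym[OF ql2]]] .
      next
        case False
        then have ql1: "(q, l1) \<in> (erel ?E' te)\<^sup>*" using bwd by blast
        have "(q, l2) \<notin> (erel ?E' te)\<^sup>*"
          using nr' rtrancl_trans[OF erel_rt_sym[OF ql1]] by blast
        then have pl2: "(p, l2) \<in> (erel ?E' te)\<^sup>*" using fwd by blast
        have "(q, p) \<in> (erel (TE - {f}) te)\<^sup>*"
          using rtrancl_trans[OF rtrancl_trans[OF erel_mono[OF sub ql1] W1] erel_mono[OF sub erel_rt_sym[OF pl2]]] .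
        then show ?thesis by (rule erel_rt_sym)
      qed
      then show False using no_cycle_reach[OF nc _ pq] fin by blast
    qed simp
  qed
qed

lemma comp_disj:
  assumes "Q \<in> components V Ed ends" "Q' \<in> components V Ed ends" "v \<in> Q" "v \<in> Q'"
  shows "Q = Q'"
proof -
  obtain w where w: "w \<in> V" "Q = {z. reach V Ed ends w z}" using assms(1) by (auto simp: components_def)
  obtain w' where w': "w' \<in> V" "Q' = {z. reach V Ed ends w' z}" using assms(2) by (auto simp: components_def)
  have a: "(w, v) \<in> (erel Ed ends)\<^sup>*" using assms(3) w by (simp add: reach_erel)
  have b: "(w', v) \<in> (erel Ed ends)\<^sup>*" using assms(4) w' by (simp add: reach_erel)
  have ww: "(w, w') \<in> (erel Ed ends)\<^sup>*" using rtrancl_trans[OF a erel_rt_sym[OF b]] .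
  have ww': "(w', w) \<in> (erel Ed ends)\<^sup>*" using erel_rt_sym[OF ww] .
  show ?thesis unfolding w(2) w'(2) reach_erel using w(1) w'(1)
    rtrancl_trans[OF ww] rtrancl_trans[OF ww'] by blast
qed



theorem lemma5p9:
  fixes V :: "'v set" and E :: "'e set" and ends :: "'e \<Rightarrow> 'v set"
    and q :: nat and S T :: "nat \<Rightarrow> 'v set"
    and l :: nat and El :: "'e set" and x :: "'e \<Rightarrow> real" and \<beta> :: real
    and D :: "('n, 'f, 'v, 'e) temb pmf"
    and F :: "'e set" and \<tau> :: "('n, 'f, 'v, 'e) temb"
  assumes G: "wf_graph V E ends"
    and ST: "\<forall>i<q. S i \<subseteq> V \<and> T i \<subseteq> V"
    and l1: "l \<ge> 1"
    and El: "El \<subseteq> E"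
    and Elconn: "\<forall>i<q. \<forall>X. T i \<subseteq> X \<and> X \<subseteq> V - S i \<longrightarrow> card (cut El ends X) \<ge> l"
    and x01: "\<forall>e\<in>E. 0 \<le> x e \<and> x e \<le> 1"
    and xEl: "\<forall>e\<in>El. x e = 1"
    and xcut: "\<forall>i<q. \<forall>X. T i \<subseteq> X \<and> X \<subseteq> V - S i \<longrightarrow>
                 (\<Sum>e\<in>cut E ends X. x e) \<ge> real l + 1"
    and beta: "\<beta> \<ge> 1"
    and Demb: "\<forall>\<sigma>\<in>set_pmf D. is_temb V E ends (xtilde l \<beta> (card V) x) \<sigma>"
    and Dstretch: "\<forall>e\<in>E. (\<integral>\<^sup>+ \<sigma>. ennreal (\<Sum>f\<in>Minv \<sigma> {e}. ty \<sigma> f) \<partial>measure_pmf D)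
                      \<le> ennreal (\<beta> * xtilde l \<beta> (card V) x e)"
    and Dflow: "\<forall>\<sigma>\<in>set_pmf D. \<forall>A B. A \<subseteq> V \<and> B \<subseteq> V \<and> A \<inter> B = {} \<longrightarrow>
                  max_flow (tnodes \<sigma>) (tedges \<sigma>) (tends \<sigma>) (ty \<sigma>)
                    {u \<in> leaves \<sigma>. nmap \<sigma> u \<in> A} {u \<in> leaves \<sigma>. nmap \<sigma> u \<in> B}
                  \<ge> max_flow V E ends (xtilde l \<beta> (card V) x) A B"
    and FH: "F \<subseteq> LARGE E l \<beta> x"
    and Fcard: "card F = l"
    and tau: "\<tau> \<in> set_pmf D"
    and good: "good_for \<tau> F"
  shows "real (card {Q \<in> components V (LARGE E l \<beta> x - F) ends. shattered \<tau> F Q})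
           \<le> 2 * real l * \<beta>"
  proof -
  let ?L = "LARGE E l \<beta> x"
  let ?c = "xtilde l \<beta> (card V) x"
  let ?N = "tnodes \<tau>" and ?TE = "tedges \<tau>" and ?te = "tends \<tau>" and ?nm = "nmap \<tau>"
  define \<delta> where "\<delta> = 1 / (4 * real l * \<beta>)"
  define M where "M = Minv \<tau> F"
  define Sh where "Sh = {Q \<in> components V (?L - F) ends. shattered \<tau> F Q}"
  have emb: "is_temb V E ends ?c \<tau>" using Demb tau by blast
  have tree: "is_tree ?N ?TE ?te" using emb by (simp add: is_temb_def)
  have wfT: "wf_graph ?N ?TE ?te" using tree by (simp add: is_tree_def)
  have conn: "\<forall>u\<in>?N. \<forall>v\<in>?N. reach ?N ?TE ?te u v" using tree by (simp add: is_tree_def)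
  have finTE: "finite ?TE" using wfT by (simp add: wf_graph_def)
  have teN: "\<forall>f\<in>?TE. ?te f \<subseteq> ?N \<and> card (?te f) = 2" using wfT by (simp add: wf_graph_def)
  have MT: "M \<subseteq> ?TE" by (auto simp: M_def Minv_def)
  have finM: "finite M" using finTE MT finite_subset by blast
  have finE: "finite E" using G by (simp add: wf_graph_def)
  have endsE: "\<forall>e\<in>E. ends e \<subseteq> V \<and> card (ends e) = 2" using G by (simp add: wf_graph_def)
  have lpos: "real l > 0" using l1 by simp
  have dpos: "\<delta> > 0" using lpos beta by (simp add: \<delta>_def)
  have cnn: "?c e \<ge> 0" for e
  proof -
    have h: "(1 / (2 * real (card V) ^ 2)) * \<delta> \<ge> 0" using dpos by simp
    show ?thesis unfolding xtilde_def \<delta>_def[symmetric] using h dpos by (smt (verit))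
  qed
  have cL: "?c e = \<delta>" if "e \<in> ?L" for e
    using that by (simp add: LARGE_def xtilde_def \<delta>_def)
  have ty_eq: "\<forall>f\<in>?TE. \<forall>u\<in>?te f. ty \<tau> f = (\<Sum>e\<in>cut E ends
           (?nm ` {l \<in> leaves \<tau>. reach ?N (?TE - {f}) ?te u l}). ?c e)"
    using emb by (simp add: is_temb_def)
  have inj_nm: "inj_on ?nm (leaves \<tau>)" using emb by (simp add: is_temb_def bij_betw_def)
  have leavesN: "leaves \<tau> \<subseteq> ?N" by (auto simp: leaves_def)
  define uf where "uf f = (SOME u. u \<in> ?te f)" for f
  define Xf where "Xf f = ?nm ` {l \<in> leaves \<tau>. reach ?N (?TE - {f}) ?te (uf f) l}" for f
  have ufin: "uf f \<in> ?te f" if "f \<in> ?TE" for f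
  proof -
    have "?te f \<noteq> {}" using teN that by fastforce
    then show ?thesis unfolding uf_def by (simp add: some_in_eq)
  qed
  have ty_X: "ty \<tau> f = (\<Sum>e\<in>cut E ends (Xf f). ?c e)" if "f \<in> ?TE" for f
    using ty_eq ufin[OF that] that unfolding Xf_def by blast
  have memX: "?nm lf \<in> Xf f \<longleftrightarrow> (uf f, lf) \<in> (erel (?TE - {f}) ?te)\<^sup>*"
    if "lf \<in> leaves \<tau>" "f \<in> ?TE" for lf f
  proof
    assume "?nm lf \<in> Xf f"
    then obtain l' where l': "l' \<in> leaves \<tau>" "reach ?N (?TE - {f}) ?te (uf f) l'" "?nm lf = ?nm l'"
      unfolding Xf_def by blast
    then have "lf = l'" using inj_nm that(1) by (simp add: inj_on_eq_iff)
    then show "(uf f, lf) \<in> (erel (?TE - {f}) ?te)\<^sup>*" using l' by (simp add: reach_erel)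
  next
    assume "(uf f, lf) \<in> (erel (?TE - {f}) ?te)\<^sup>*"
    moreover have "uf f \<in> ?N" using ufin[OF that(2)] teN that(2) by blast
    ultimately show "?nm lf \<in> Xf f" unfolding Xf_def using that(1) by (auto simp: reach_erel)
  qed
  have key: "\<exists>f\<in>M. \<exists>e. e \<in> cut E ends (Xf f) \<and> e \<in> ?L \<and> ends e \<subseteq> Q" if Q: "Q \<in> Sh" for Q
  proof -
    from Q obtain w0 where w0: "w0 \<in> V" "Q = {v. reach V (?L - F) ends w0 v}"
      and sh: "shattered \<tau> F Q" by (auto simp: Sh_def components_def)
    from sh obtain a1 a2 where ll: "a1 \<in> leaves \<tau>" "a2 \<in> leaves \<tau>" "?nm a1 \<in> Q" "?nm a2 \<in> Q"
      "\<not> reach ?N (?TE - M) ?te a1 a2" unfolding shattered_def M_def by blast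
    have aN: "a1 \<in> ?N" "a2 \<in> ?N" using ll leavesN by auto
    have nr: "(a1, a2) \<notin> (erel (?TE - M) ?te)\<^sup>*" using ll(5) aN by (simp add: reach_erel)
    obtain f where f: "f \<in> M" and nrf: "(a1, a2) \<notin> (erel (?TE - {f}) ?te)\<^sup>*"
      using sep_single[OF tree finM nr aN] by blast
    have fT: "f \<in> ?TE" using f MT by blast
    have "card (?te f) = 2" using teN fT by blast
    then obtain p q where pq: "?te f = {p, q}" by (auto simp: card_2_iff)
    let ?u = "uf f"
    let ?R = "erel (?TE - {f}) ?te"
    have uN: "?u \<in> ?N" using ufin[OF fT] teN fT by blast
    have upq: "?u = p \<or> ?u = q" using ufin[OF fT] pq by blast
    have noboth: "\<not> ((a, a1) \<in> ?R\<^sup>* \<and> (a, a2) \<in> ?R\<^sup>*)" for a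
    proof
      assume h: "(a, a1) \<in> ?R\<^sup>* \<and> (a, a2) \<in> ?R\<^sup>*"
      then have "(a1, a2) \<in> ?R\<^sup>*" using rtrancl_trans[OF erel_rt_sym[OF conjunct1[OF h]] conjunct2[OF h]] by simp
      then show False using nrf by simp
    qed
    have "reach ?N ?TE ?te ?u a1" using conn uN aN by blast
    then have r1: "(?u, a1) \<in> (erel ?TE ?te)\<^sup>*" by (simp add: reach_erel)
    have s1: "(?u, a1) \<in> ?R\<^sup>* \<or> (p, a1) \<in> ?R\<^sup>* \<or> (q, a1) \<in> ?R\<^sup>*"
      using erel_split[OF r1 pq] .
    have "reach ?N ?TE ?te ?u a2" using conn uN aN by blast
    then have r2: "(?u, a2) \<in> (erel ?TE ?te)\<^sup>*" by (simp add: reach_erel)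
    have s2: "(?u, a2) \<in> ?R\<^sup>* \<or> (p, a2) \<in> ?R\<^sup>* \<or> (q, a2) \<in> ?R\<^sup>*"
      using erel_split[OF r2 pq] .
    have "((?u, a1) \<in> ?R\<^sup>* \<and> (?u, a2) \<notin> ?R\<^sup>*) \<or> ((?u, a2) \<in> ?R\<^sup>* \<and> (?u, a1) \<notin> ?R\<^sup>*)"
      using s1 s2 upq noboth by blast
    then obtain P1 P2 where P: "P1 \<in> Q" "P2 \<in> Q" "P1 \<in> Xf f" "P2 \<notin> Xf f"
      using memX[OF ll(1) fT] memX[OF ll(2) fT] ll(3,4) by blast
    let ?r = "erel (?L - F) ends"
    have w1: "(w0, P1) \<in> ?r\<^sup>*" and w2: "(w0, P2) \<in> ?r\<^sup>*" using P(1,2) w0 by (auto simp: reach_erel)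
    have "(P1, P2) \<in> ?r\<^sup>*" using rtrancl_trans[OF erel_rt_sym[OF w1] w2] .
    then obtain a b where ab: "(P1, a) \<in> ?r\<^sup>*" "(a, b) \<in> ?r" "a \<in> Xf f" "b \<notin> Xf f"
      using erel_cross[OF _ P(3,4)] by blast
    from ab(2) obtain e where e: "e \<in> ?L - F" "ends e = {a, b}" by (auto simp: erel_def)
    have eE: "e \<in> E" using e(1) by (simp add: LARGE_def)
    have wa: "(w0, a) \<in> ?r\<^sup>*" using rtrancl_trans[OF w1 ab(1)] .
    have wb: "(w0, b) \<in> ?r\<^sup>*" using rtrancl_into_rtrancl[OF wa ab(2)] .
    have "e \<in> cut E ends (Xf f)" using eE e(2) ab(3,4) by (auto simp: cut_def)
    moreover have "ends e \<subseteq> Q" using e(2) wa wb w0 by (auto simp: reach_erel)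
    ultimately show ?thesis using f e(1) by blast
  qed
  have "\<forall>Q\<in>Sh. \<exists>p. fst p \<in> M \<and> snd p \<in> cut E ends (Xf (fst p))
      \<and> snd p \<in> ?L \<and> ends (snd p) \<subseteq> Q"
  proof
    fix Q assume "Q \<in> Sh"
    from key[OF this] obtain f e where "f \<in> M" "e \<in> cut E ends (Xf f)" "e \<in> ?L" "ends e \<subseteq> Q"
      by blast
    then show "\<exists>p. fst p \<in> M \<and> snd p \<in> cut E ends (Xf (fst p))
      \<and> snd p \<in> ?L \<and> ends (snd p) \<subseteq> Q" by (intro exI[of _ "(f, e)"]) simp
  qed
  from bchoice[OF this] obtain g where g0: "\<forall>Q\<in>Sh. fst (g Q) \<in> M \<and> snd (g Q) \<in> cut E ends (Xf (fst (g Q)))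
      \<and> snd (g Q) \<in> ?L \<and> ends (snd (g Q)) \<subseteq> Q"
    by blast
  have g: "fst (g Q) \<in> M \<and> snd (g Q) \<in> cut E ends (Xf (fst (g Q)))
      \<and> snd (g Q) \<in> ?L \<and> ends (snd (g Q)) \<subseteq> Q" if "Q \<in> Sh" for Q
    using g0 that by blast
  have inj: "inj_on g Sh"
  proof
    fix Q Q' assume QQ: "Q \<in> Sh" "Q' \<in> Sh" "g Q = g Q'"
    let ?e = "snd (g Q)"
    have "?e \<in> E" using g[OF QQ(1)] by (simp add: LARGE_def)
    then have "card (ends ?e) = 2" using endsE by blast
    then have "ends ?e \<noteq> {}" by auto
    moreover have "ends ?e \<subseteq> Q" using g[OF QQ(1)] by blast
    moreover have "ends (snd (g Q')) \<subseteq> Q'" using g[OF QQ(2)] by blast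
    then have "ends ?e \<subseteq> Q'" using QQ(3) by simp
    ultimately obtain v where v: "v \<in> Q" "v \<in> Q'" by blast
    show "Q = Q'" using comp_disj[of Q V "?L - F" ends Q' v] QQ v by (simp add: Sh_def)
  qed
  have finSig: "finite (Sigma M (\<lambda>f. cut E ends (Xf f)))"
  proof (rule finite_SigmaI[OF finM])
    fix f show "finite (cut E ends (Xf f))"
      using finE by (rule rev_finite_subset) (auto simp: cut_def)
  qed
  have "(\<Sum>Q\<in>Sh. ?c (snd (g Q))) = (\<Sum>Q\<in>Sh. \<delta>)"
  proof (rule sum.cong)
    fix Q assume "Q \<in> Sh"
    then have "snd (g Q) \<in> ?L" using g by blast
    then show "?c (snd (g Q)) = \<delta>" by (rule cL)
  qed simp
  then have "real (card Sh) * \<delta> = (\<Sum>Q\<in>Sh. ?c (snd (g Q)))" by simp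
  also have "\<dots> = (\<Sum>p\<in>g ` Sh. ?c (snd p))" using sum.reindex[OF inj, of "\<lambda>p. ?c (snd p)"] by (simp add: comp_def)
  also have "\<dots> \<le> (\<Sum>p\<in>Sigma M (\<lambda>f. cut E ends (Xf f)). ?c (snd p))"
  proof (rule sum_mono2[OF finSig])
    show "g ` Sh \<subseteq> Sigma M (\<lambda>f. cut E ends (Xf f))"
    proof
      fix p assume "p \<in> g ` Sh"
      then obtain Q where "Q \<in> Sh" "p = g Q" by blast
      then have "fst p \<in> M" "snd p \<in> cut E ends (Xf (fst p))" using g by blast+
      then show "p \<in> Sigma M (\<lambda>f. cut E ends (Xf f))" by (cases p) simp
    qed
  qed (rule cnn)
  also have "\<dots> = (\<Sum>f\<in>M. \<Sum>e\<in>cut E ends (Xf f). ?c e)"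
    using finM finE by (simp add: sum.Sigma cut_def split_def)
  also have "\<dots> = (\<Sum>f\<in>M. ty \<tau> f)" proof (rule sum.cong)
    fix f assume "f \<in> M"
    then have "f \<in> ?TE" using MT by blast
    then show "(\<Sum>e\<in>cut E ends (Xf f). ?c e) = ty \<tau> f" using ty_X by simp
  qed simp
  also have "\<dots> \<le> 1/2" using good by (simp add: good_for_def M_def)
  finally have h: "real (card Sh) * \<delta> \<le> 1/2" .
  have "real (card Sh) = real (card Sh) * \<delta> * (4 * real l * \<beta>)"
    using lpos beta by (simp add: \<delta>_def)
  also have "\<dots> \<le> 1/2 * (4 * real l * \<beta>)"
    by (rule mult_right_mono[OF h]) (use lpos beta in simp)
  finally have "real (card Sh) \<le> 1/2 * (4 * real l * \<beta>)" .
  then show ?thesis unfolding Sh_def by (simp add: algebra_simps)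
qed

end
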